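(* Given any member of an IQP$^*$ circuit family, there is an efficient (polynomial-size) implementation of it in MBQC in which all single-qubit measurements are in fixed bases and are non-adaptive. That is, the measurements can be performed simultaneously, and linear classical post-processing of the outcomes yields exactly the output distribution of the IQP$^*$ circuit.
   Context: IQP$^*$ circuit family. The family is indexed by the input length $n$. For input $x\in\{0,1\}^n$, the circuit proceeds as follows. - It acts on $q=\mathrm{poly}(n)$ qubits prepared in $|x\rangle|0\rangle^{\otimes(q-n)}$. - It applies a unitary $U_n$, which depends only on $n$. $U_n$ is a product of $\mathrm{poly}(n)$ gates $D(\theta_z,z)=e^{i\theta_z X[z]}$. - In each gate, $z\in\{0,1\}^q$, $X[z]=\bigotimes_j X^{z_j}$ with $X$ the Pauli-$X$ operator, and $\theta_z\in(0,2\pi]$ has a $\mathrm{poly}(n)$-size description. - It measures every qubit in the computational basis. MBQC. A multi-qubit resource state (e.g. a cluster/graph state, made by preparing qubits in $|+\rangle$ and applying controlled-$Z$ gates) is prepared. Single-qubit projective measurements are then performed on it, and the outcomes are processed by linear classical side-processing (XOR and NOT gates). Non-adaptive means no measurement basis depends on the outcomes of other measurements. *)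

theory Defs
  imports Complex_Main
begin

text \<open>Bit strings are boolean lists; a state on k qubits is a function from
  bit strings (of length k) to complex amplitudes.\<close>

definition bits :: "nat \<Rightarrow> bool list set" where
  "bits k = {s. length s = k}"

definition xor_list :: "bool list \<Rightarrow> bool list \<Rightarrow> bool list" where
  "xor_list a b = map2 (\<noteq>) a b"

text \<open>Gate D(theta,z) = exp(i theta X[z]); since X[z]^2 = I this equals
  cos theta I + i sin theta X[z], and X[z] maps basis state y to y xor z.\<close>

definition gate_apply :: "real \<times> bool list \<Rightarrow> (bool list \<Rightarrow> complex) \<Rightarrow> (bool list \<Rightarrow> complex)" where
  "gate_apply g \<psi> = (\<lambda>y. complex_of_real (cos (fst g)) * \<psi> y
        + \<i> * complex_of_real (sin (fst g)) * \<psi> (xor_list y (snd g)))"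

definition iqp_init :: "bool list \<Rightarrow> nat \<Rightarrow> (bool list \<Rightarrow> complex)" where
  "iqp_init x q = (\<lambda>y. if y = x @ replicate (q - length x) False then 1 else 0)"

definition iqp_prob :: "(real \<times> bool list) list \<Rightarrow> nat \<Rightarrow> bool list \<Rightarrow> bool list \<Rightarrow> real" where
  "iqp_prob gates q x y = (cmod (fold gate_apply gates (iqp_init x q) y))\<^sup>2"

definition iqp_circuit :: "nat \<Rightarrow> nat \<Rightarrow> (real \<times> bool list) list \<Rightarrow> bool" where
  "iqp_circuit n q gates \<longleftrightarrow> n \<le> q \<and>
     (\<forall>g \<in> set gates. length (snd g) = q \<and> 0 < fst g \<and> fst g \<le> 2 * pi)"

definition simple_graph :: "nat \<Rightarrow> (nat \<Rightarrow> nat \<Rightarrow> bool) \<Rightarrow> bool" where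
  "simple_graph m E \<longleftrightarrow> (\<forall>i j. E i j \<longrightarrow> i < m \<and> j < m \<and> i \<noteq> j \<and> E j i)"

text \<open>Graph state: prepare |+> on every vertex and apply CZ on every edge:
  amplitude of t is (-1)^(number of edges whose endpoints are both 1) / sqrt(2^m).\<close>
definition graph_state :: "nat \<Rightarrow> (nat \<Rightarrow> nat \<Rightarrow> bool) \<Rightarrow> bool list \<Rightarrow> complex" where
  "graph_state m E t = complex_of_real
     ((-1) ^ card {(i, j). i < j \<and> j < m \<and> E i j \<and> t ! i \<and> t ! j} / sqrt (2 ^ m))"

text \<open>Single-qubit measurement bases: b j k is the k-th basis vector (a vector in C^2,
  indexed by bool) of the measurement on qubit j; must be orthonormal.\<close>
definition onb_bases :: "nat \<Rightarrow> (nat \<Rightarrow> bool \<Rightarrow> bool \<Rightarrow> complex) \<Rightarrow> bool" where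
  "onb_bases m b \<longleftrightarrow> (\<forall>j < m. \<forall>k k'.
      (\<Sum>t\<in>UNIV. cnj (b j k t) * b j k' t) = (if k = k' then 1 else 0))"

definition mbqc_outcome_prob :: "nat \<Rightarrow> (nat \<Rightarrow> nat \<Rightarrow> bool) \<Rightarrow> (nat \<Rightarrow> bool \<Rightarrow> bool \<Rightarrow> complex)
     \<Rightarrow> bool list \<Rightarrow> real" where
  "mbqc_outcome_prob m E b s = (cmod (\<Sum>t\<in>bits m.
      (\<Prod>j<m. cnj (b j (s ! j) (t ! j))) * graph_state m E t))\<^sup>2"

definition lin_post :: "nat \<Rightarrow> nat \<Rightarrow> nat \<Rightarrow> (nat \<Rightarrow> nat \<Rightarrow> bool) \<Rightarrow> (nat \<Rightarrow> nat \<Rightarrow> bool)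
     \<Rightarrow> (nat \<Rightarrow> bool) \<Rightarrow> bool list \<Rightarrow> bool list \<Rightarrow> bool list" where
  "lin_post q m n A B c x s = map (\<lambda>i. (c i \<noteq> odd (card {j. j < m \<and> A i j \<and> s ! j}))
        \<noteq> odd (card {j. j < n \<and> B i j \<and> x ! j})) [0..<q]"

definition mbqc_prob :: "nat \<Rightarrow> nat \<Rightarrow> nat \<Rightarrow> (nat \<Rightarrow> nat \<Rightarrow> bool) \<Rightarrow> (nat \<Rightarrow> bool \<Rightarrow> bool \<Rightarrow> complex)
     \<Rightarrow> (nat \<Rightarrow> nat \<Rightarrow> bool) \<Rightarrow> (nat \<Rightarrow> nat \<Rightarrow> bool) \<Rightarrow> (nat \<Rightarrow> bool)
     \<Rightarrow> bool list \<Rightarrow> bool list \<Rightarrow> real" where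
  "mbqc_prob q m n E b A B c x y =
     (\<Sum>s\<in>{s \<in> bits m. lin_post q m n A B c x s = y}. mbqc_outcome_prob m E b s)"

end

theory Submission imports Defs begin

definition sg :: "bool \<Rightarrow> complex" where "sg b = (if b then -1 else 1)"

lemma sg_xor: "sg (a \<noteq> b) = sg a * sg b" by (simp add: sg_def)
lemma sg_sq: "sg a * sg a = 1" by (simp add: sg_def)
lemma sg_and: "sg (a \<and> b) = (if b then sg a else 1)" by (simp add: sg_def)
lemma cnj_sg: "cnj (sg a) = sg a" by (simp add: sg_def)
lemma sg_inj: "sg a = sg b \<longleftrightarrow> a = b" by (simp add: sg_def)

lemma sg_card: "finite G \<Longrightarrow> (\<Prod>j\<in>G. sg (P j)) = sg (odd (card {j\<in>G. P j}))"
proof (induction G rule: finite_induct)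
  case empty then show ?case by (simp add: sg_def)
next
  case (insert x F)
  have e: "{j\<in>insert x F. P j} = (if P x then insert x {j\<in>F. P j} else {j\<in>F. P j})" by auto
  have c: "card {j\<in>insert x F. P j} = (if P x then Suc (card {j\<in>F. P j}) else card {j\<in>F. P j})"
    unfolding e using insert by auto
  show ?case by (simp only: prod.insert[OF insert(1,2)] insert(3) c) (auto simp: sg_def)
qed

definition chi :: "nat \<Rightarrow> (nat \<Rightarrow> bool) \<Rightarrow> bool list \<Rightarrow> complex" where
  "chi q W u = (\<Prod>i<q. sg (W i \<and> u!i))"

lemma chi_sq: "chi q W u * chi q W u = 1"
  by (simp add: chi_def prod.distrib[symmetric] sg_sq)

lemma chi_xor: "chi q (\<lambda>i. V i \<noteq> W i) u = chi q V u * chi q W u"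
  unfolding chi_def prod.distrib[symmetric] by (rule prod.cong) (auto simp: sg_def)

lemma chi_cong: "(\<And>i. i < q \<Longrightarrow> V i = W i) \<Longrightarrow> chi q V u = chi q W u"
  unfolding chi_def by (rule prod.cong) auto

lemma bits_Suc: "bits (Suc L) = (\<lambda>(b,v). b#v) ` (UNIV \<times> bits L)"
  by (auto simp: bits_def image_iff) (metis Suc_length_conv)

lemma sum_bits_prod:
  fixes h :: "nat \<Rightarrow> bool \<Rightarrow> 'a::comm_semiring_1"
  shows "(\<Sum>v\<in>bits L. \<Prod>g<L. h g (v!g)) = (\<Prod>g<L. h g False + h g True)"
proof (induction L arbitrary: h)
  case 0 then show ?case by (simp add: bits_def)
next
  case (Suc L)
  have inj: "inj_on (\<lambda>(b,v). b#v) (UNIV \<times> bits L)" by (auto simp: inj_on_def)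
  have "(\<Sum>v\<in>bits (Suc L). \<Prod>g<Suc L. h g (v!g))
      = (\<Sum>(b,v)\<in>UNIV \<times> bits L. \<Prod>g<Suc L. h g ((b#v)!g))"
    unfolding bits_Suc by (subst sum.reindex[OF inj]) (simp add: case_prod_unfold)
  also have "\<dots> = (\<Sum>b\<in>UNIV. \<Sum>v\<in>bits L. h 0 b * (\<Prod>g<L. h (Suc g) (v!g)))"
    by (subst sum.cartesian_product[symmetric]) (simp del: prod.lessThan_Suc add: prod.lessThan_Suc_shift)
  also have "\<dots> = (\<Sum>b\<in>UNIV. h 0 b * (\<Prod>g<L. h (Suc g) False + h (Suc g) True))"
    by (simp add: sum_distrib_left[symmetric] Suc[of "\<lambda>g. h (Suc g)"])
  also have "\<dots> = (\<Prod>g<Suc L. h g False + h g True)"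
    by (simp del: prod.lessThan_Suc add: UNIV_bool prod.lessThan_Suc_shift distrib_right)
  finally show ?case .
qed

lemma bits_add: "bits (a+b) = (\<lambda>(u,v). u@v) ` (bits a \<times> bits b)"
  by (auto simp: bits_def image_iff) (metis append_take_drop_id length_drop length_take min.absorb2 le_add1 add_diff_cancel_left')

lemma sum_bits_append: "(\<Sum>t\<in>bits (a+b). f t) = (\<Sum>u\<in>bits a. \<Sum>v\<in>bits b. f (u@v))"
proof -
  have inj: "inj_on (\<lambda>(u,v). u@v) (bits a \<times> bits b)" by (auto simp: inj_on_def bits_def)
  show ?thesis unfolding bits_add
    by (subst sum.reindex[OF inj]) (simp add: sum.cartesian_product case_prod_unfold)
qed

lemma prod_add_split: "(\<Prod>j<(q::nat)+L. f j) = (\<Prod>j<q. f j) * (\<Prod>g<L. (f (q+g) :: 'a::comm_monoid_mult))"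
  by (induction L) (simp_all add: mult.assoc)

lemma finite_bits[simp]: "finite (bits q)"
proof -
  have "bits q = {xs. set xs \<subseteq> UNIV \<and> length xs = q}" by (simp add: bits_def)
  then show ?thesis using finite_lists_length_eq[of "UNIV::bool set" q] by simp
qed

lemma card_bits: "card (bits q) = 2 ^ q"
proof -
  have "bits q = {xs. set xs \<subseteq> UNIV \<and> length xs = q}" by (simp add: bits_def)
  then show ?thesis using card_lists_length_eq[of "UNIV::bool set" q] by simp
qed

lemma chi_sum: "(\<Sum>u\<in>bits q. chi q W u) = (if \<forall>i<q. \<not> W i then 2^q else 0)"
proof -
  have "(\<Sum>u\<in>bits q. chi q W u) = (\<Prod>i<q. sg (W i \<and> False) + sg (W i \<and> True))"
    unfolding chi_def by (rule sum_bits_prod)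
  also have "\<dots> = (\<Prod>i<q. if W i then 0 else 2)"
    by (rule prod.cong) (auto simp: sg_def)
  also have "\<dots> = (if \<forall>i<q. \<not> W i then 2^q else 0)"
    by auto
  finally show ?thesis .
qed

definition gfac :: "nat \<Rightarrow> real \<times> bool list \<Rightarrow> bool list \<Rightarrow> complex" where
  "gfac q g u = complex_of_real (cos (fst g)) + \<i> * complex_of_real (sin (fst g)) * chi q (\<lambda>i. snd g ! i) u"

definition amp :: "nat \<Rightarrow> (real \<times> bool list) list \<Rightarrow> (nat \<Rightarrow> bool) \<Rightarrow> complex" where
  "amp q gs W = (\<Sum>u\<in>bits q. chi q W u * prod_list (map (\<lambda>g. gfac q g u) gs)) / 2^q"

lemma xor_nth: "i < length a \<Longrightarrow> i < length b \<Longrightarrow> xor_list a b ! i = (a!i \<noteq> b!i)"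
  by (simp add: xor_list_def)

lemma xor_len: "length (xor_list a b) = min (length a) (length b)"
  by (simp add: xor_list_def)

lemma fold_amp:
  assumes "\<forall>g\<in>set gs. length (snd g) = q" "length w = q" "y \<in> bits q"
  shows "fold gate_apply gs (\<lambda>y. if y = w then 1 else 0) y = amp q gs (\<lambda>i. y!i \<noteq> w!i)"
  using assms
proof (induction gs arbitrary: y rule: rev_induct)
  case Nil
  have "(y = w) = (\<forall>i<q. \<not> (y!i \<noteq> w!i))"
    using Nil.prems by (auto simp: bits_def list_eq_iff_nth_eq)
  then show ?case by (simp add: amp_def chi_sum)
next
  case (snoc g gs)
  let ?A = "fold gate_apply gs (\<lambda>y. if y = w then 1 else 0)"
  let ?P = "\<lambda>u. prod_list (map (\<lambda>g. gfac q g u) gs)"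
  let ?W = "\<lambda>i. y!i \<noteq> w!i"
  let ?Z = "\<lambda>i. snd g ! i"
  have lz: "length (snd g) = q" using snoc.prems by simp
  have yq: "length y = q" using snoc.prems by (simp add: bits_def)
  have xb: "xor_list y (snd g) \<in> bits q" using lz yq by (simp add: bits_def xor_len)
  have IH1: "?A y = amp q gs ?W" using snoc by simp
  have IH2: "?A (xor_list y (snd g)) = amp q gs (\<lambda>i. xor_list y (snd g) ! i \<noteq> w!i)"
    using snoc.IH[OF _ snoc.prems(2) xb] snoc.prems(1) by simp
  have ch: "chi q (\<lambda>i. xor_list y (snd g) ! i \<noteq> w!i) u = chi q ?W u * chi q ?Z u" for u
  proof -
    have "chi q (\<lambda>i. xor_list y (snd g) ! i \<noteq> w!i) u = chi q (\<lambda>i. ?W i \<noteq> ?Z i) u"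
      by (rule chi_cong) (auto simp: xor_nth lz yq)
    also have "\<dots> = chi q ?W u * chi q ?Z u" by (rule chi_xor)
    finally show ?thesis .
  qed
  have "fold gate_apply (gs @ [g]) (\<lambda>y. if y = w then 1 else 0) y
      = complex_of_real (cos (fst g)) * ?A y + \<i> * complex_of_real (sin (fst g)) * ?A (xor_list y (snd g))"
    by (simp add: gate_apply_def)
  also have "\<dots> = (\<Sum>u\<in>bits q. chi q ?W u * ?P u * gfac q g u) / 2^q"
    unfolding IH1 IH2 amp_def ch gfac_def
    by (simp add: sum_distrib_left sum.distrib add_divide_distrib algebra_simps)
  also have "\<dots> = amp q (gs @ [g]) ?W"
    by (simp add: amp_def mult.assoc)
  finally show ?case .
qed

lemma prod_list_nth: "prod_list (map f xs) = (\<Prod>i<length xs. (f (xs!i) :: 'a::comm_monoid_mult))"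
  by (induction xs) (simp_all del: prod.lessThan_Suc add: prod.lessThan_Suc_shift)

lemma m1_pow: "(-1::complex)^n = sg (odd n)"
  by (simp add: sg_def minus_one_power_iff)

lemma sg_card_lt: "(\<Prod>j<(m::nat). sg (P j)) = sg (odd (card {j. j < m \<and> P j}))"
  using sg_card[of "{..<m}" P] by simp

definition Eg :: "nat \<Rightarrow> (real \<times> bool list) list \<Rightarrow> nat \<Rightarrow> nat \<Rightarrow> bool" where
  "Eg q gs i j = ((i<q \<and> q\<le>j \<and> j<q+length gs \<and> snd (gs!(j-q)) ! i)
               \<or> (j<q \<and> q\<le>i \<and> i<q+length gs \<and> snd (gs!(i-q)) ! j))"

lemma gs_split:
  assumes u: "u \<in> bits q" and v: "v \<in> bits (length gs)"
  shows "graph_state (q + length gs) (Eg q gs) (u@v)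
     = (\<Prod>g<length gs. if v!g then chi q (\<lambda>i. snd (gs!g) ! i) u else 1)
        / complex_of_real (sqrt (2^(q + length gs)))"
proof -
  define L where "L = length gs"
  define t where "t = u@v"
  have lu: "length u = q" using u by (simp add: bits_def)
  define P where "P = (\<lambda>(i,j). i<j \<and> Eg q gs i j \<and> t!i \<and> t!j)"
  have S: "{(i, j). i < j \<and> j < q+L \<and> Eg q gs i j \<and> t ! i \<and> t ! j}
       = {p \<in> {..<q+L} \<times> {..<q+L}. P p}" by (auto simp: P_def)
  have "(-1::complex) ^ card {(i, j). i < j \<and> j < q+L \<and> Eg q gs i j \<and> t ! i \<and> t ! j}
      = (\<Prod>p \<in> {..<q+L} \<times> {..<q+L}. sg (P p))"
    unfolding S m1_pow by (rule sg_card[symmetric]) simp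
  also have "\<dots> = (\<Prod>i<q+L. \<Prod>j<q+L. sg (P (i,j)))"
    by (simp add: prod.cartesian_product)
  also have "\<dots> = (\<Prod>i<q. \<Prod>j<q+L. sg (P (i,j)))"
  proof -
    have "(\<Prod>g<L. \<Prod>j<q+L. sg (P (q+g,j))) = 1"
      by (intro prod.neutral ballI) (auto simp: P_def Eg_def sg_def)
    then show ?thesis by (simp add: prod_add_split)
  qed
  also have "\<dots> = (\<Prod>i<q. \<Prod>g<L. sg (snd (gs!g) ! i \<and> u!i \<and> v!g))"
  proof (rule prod.cong[OF refl])
    fix i assume i: "i \<in> {..<q}"
    have a: "(\<Prod>j<q. sg (P (i,j))) = 1"
      by (intro prod.neutral ballI) (auto simp: P_def Eg_def sg_def)
    have b: "(\<Prod>g<L. sg (P (i,q+g))) = (\<Prod>g<L. sg (snd (gs!g) ! i \<and> u!i \<and> v!g))"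
      by (rule prod.cong[OF refl]) (use i lu in \<open>auto simp: P_def Eg_def L_def t_def nth_append\<close>)
    show "(\<Prod>j<q+L. sg (P (i,j))) = (\<Prod>g<L. sg (snd (gs!g) ! i \<and> u!i \<and> v!g))"
      by (simp add: prod_add_split a b)
  qed
  also have "\<dots> = (\<Prod>g<L. \<Prod>i<q. sg (snd (gs!g) ! i \<and> u!i \<and> v!g))"
    by (rule prod.swap)
  also have "\<dots> = (\<Prod>g<L. if v!g then chi q (\<lambda>i. snd (gs!g) ! i) u else 1)"
    by (rule prod.cong[OF refl]) (auto simp: chi_def sg_def)
  finally show ?thesis
    unfolding graph_state_def L_def t_def by simp
qed

definition bgate :: "real \<Rightarrow> bool \<Rightarrow> bool \<Rightarrow> complex" where
  "bgate th k \<beta> = (if k = \<beta> then complex_of_real (cos th) else - \<i> * complex_of_real (sin th))"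

definition bb :: "nat \<Rightarrow> (real \<times> bool list) list \<Rightarrow> nat \<Rightarrow> bool \<Rightarrow> bool \<Rightarrow> complex" where
  "bb q gs j k \<beta> = (if j < q then sg (k \<and> \<beta>) * complex_of_real (1 / sqrt 2)
                      else bgate (fst (gs!(j-q))) k \<beta>)"

definition Wc :: "nat \<Rightarrow> (real \<times> bool list) list \<Rightarrow> bool list \<Rightarrow> nat \<Rightarrow> bool" where
  "Wc q gs c i = odd (card {g. g < length gs \<and> snd (gs!g) ! i \<and> c!g})"

lemma const_eq: "(1 / sqrt 2) ^ q / sqrt (2 ^ (q + L)) = 1 / (2 ^ q * sqrt (2 ^ L))"
proof -
  have "sqrt (2 ^ (q + L)) = sqrt 2 ^ q * sqrt (2^L)"
    by (simp add: power_add real_sqrt_mult real_sqrt_power)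
  moreover have "sqrt 2 ^ q * sqrt 2 ^ q = (2::real) ^ q"
    by (simp add: power_mult_distrib[symmetric])
  ultimately show ?thesis by (simp add: power_one_over mult.assoc[symmetric])
qed

lemma gate_sum:
  assumes "X * X = 1"
  shows "cnj (bgate th c False) * 1 + cnj (bgate th c True) * X
       = (if c then X else 1) * (complex_of_real (cos th) + \<i> * complex_of_real (sin th) * X)"
proof (cases c)
  case True
  have "\<i> * complex_of_real (sin th) = \<i> * complex_of_real (sin th) * (X * X)" using assms by simp
  then show ?thesis using True by (simp add: bgate_def algebra_simps)
next
  case False then show ?thesis by (simp add: bgate_def algebra_simps)
qed

lemma inner_v:
  assumes u: "u \<in> bits q" and s: "s \<in> bits (q + length gs)"
  shows "(\<Sum>v\<in>bits (length gs). (\<Prod>j<q+length gs. cnj (bb q gs j (s!j) ((u@v)!j)))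
             * graph_state (q+length gs) (Eg q gs) (u@v))
     = chi q (\<lambda>i. s!i \<noteq> Wc q gs (drop q s) i) u * prod_list (map (\<lambda>g. gfac q g u) gs)
        * complex_of_real (1 / (2 ^ q * sqrt (2 ^ length gs)))"
proof -
  define L where "L = length gs"
  define c where "c = drop q s"
  define X where "X g = chi q (\<lambda>i. snd (gs!g) ! i) u" for g
  define r where "r = complex_of_real (1 / sqrt 2)"
  have lu: "length u = q" using u by (simp add: bits_def)
  have ls: "length s = q + L" using s by (simp add: bits_def L_def)
  have sc: "s!(q+g) = c!g" for g using ls by (simp add: c_def)
  have pb: "(\<Prod>j<q+L. cnj (bb q gs j (s!j) ((u@v)!j)))
      = chi q (\<lambda>i. s!i) u * r^q * (\<Prod>g<L. cnj (bgate (fst (gs!g)) (c!g) (v!g)))" for v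
  proof -
    have "(\<Prod>j<q. cnj (bb q gs j (s!j) ((u@v)!j))) = (\<Prod>j<q. sg (s!j \<and> u!j) * r)"
      by (rule prod.cong[OF refl]) (simp add: bb_def nth_append lu r_def cnj_sg)
    also have "\<dots> = chi q (\<lambda>i. s!i) u * r^q"
      by (simp add: prod.distrib chi_def)
    finally have a: "(\<Prod>j<q. cnj (bb q gs j (s!j) ((u@v)!j))) = chi q (\<lambda>i. s!i) u * r^q" .
    have b: "(\<Prod>g<L. cnj (bb q gs (q+g) (s!(q+g)) ((u@v)!(q+g))))
        = (\<Prod>g<L. cnj (bgate (fst (gs!g)) (c!g) (v!g)))"
      by (rule prod.cong[OF refl]) (simp add: bb_def nth_append lu sc)
    show ?thesis by (simp add: prod_add_split a b)
  qed
  have XX: "X g * X g = 1" for g by (simp add: X_def chi_sq)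
  have sv: "(\<Sum>v\<in>bits L. (\<Prod>g<L. cnj (bgate (fst (gs!g)) (c!g) (v!g))) * (\<Prod>g<L. if v!g then X g else 1))
      = (\<Prod>g<L. (if c!g then X g else 1) * gfac q (gs!g) u)"
  proof -
    have "(\<Sum>v\<in>bits L. (\<Prod>g<L. cnj (bgate (fst (gs!g)) (c!g) (v!g))) * (\<Prod>g<L. if v!g then X g else 1))
       = (\<Sum>v\<in>bits L. \<Prod>g<L. (\<lambda>g \<beta>. cnj (bgate (fst (gs!g)) (c!g) \<beta>) * (if \<beta> then X g else 1)) g (v!g))"
      by (simp add: prod.distrib)
    also have "\<dots> = (\<Prod>g<L. cnj (bgate (fst (gs!g)) (c!g) False) * 1 + cnj (bgate (fst (gs!g)) (c!g) True) * X g)"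
      by (subst sum_bits_prod) simp
    also have "\<dots> = (\<Prod>g<L. (if c!g then X g else 1) * gfac q (gs!g) u)"
    proof (rule prod.cong[OF refl])
      fix g
      show "cnj (bgate (fst (gs!g)) (c!g) False) * 1 + cnj (bgate (fst (gs!g)) (c!g) True) * X g
          = (if c!g then X g else 1) * gfac q (gs!g) u"
        using gate_sum[OF XX, of "fst (gs!g)" "c!g"] unfolding gfac_def X_def by simp
    qed
    finally show ?thesis .
  qed
  have cx: "chi q (\<lambda>i. s!i) u * (\<Prod>g<L. if c!g then X g else 1) = chi q (\<lambda>i. s!i \<noteq> Wc q gs c i) u"
  proof -
    have "(\<Prod>g<L. if c!g then X g else 1) = (\<Prod>g<L. \<Prod>i<q. sg ((snd (gs!g) ! i \<and> c!g) \<and> u!i))"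
      by (rule prod.cong[OF refl]) (auto simp: X_def chi_def sg_def)
    also have "\<dots> = (\<Prod>i<q. \<Prod>g<L. sg ((snd (gs!g) ! i \<and> c!g) \<and> u!i))"
      by (rule prod.swap)
    also have "\<dots> = (\<Prod>i<q. sg (Wc q gs c i \<and> u!i))"
    proof (rule prod.cong[OF refl])
      fix i
      have "(\<Prod>g<L. sg (snd (gs!g) ! i \<and> c!g)) = sg (Wc q gs c i)"
        unfolding sg_card_lt Wc_def L_def by (simp add: conj_assoc)
      then show "(\<Prod>g<L. sg ((snd (gs!g) ! i \<and> c!g) \<and> u!i)) = sg (Wc q gs c i \<and> u!i)"
        by (cases "u!i") (simp_all add: sg_def)
    qed
    also have "\<dots> = chi q (Wc q gs c) u" by (simp add: chi_def)
    finally have "(\<Prod>g<L. if c!g then X g else 1) = chi q (Wc q gs c) u" .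
    then show ?thesis using chi_xor[of q "\<lambda>i. s!i" "Wc q gs c" u] by simp
  qed
  have "(\<Sum>v\<in>bits L. (\<Prod>j<q+L. cnj (bb q gs j (s!j) ((u@v)!j))) * graph_state (q+L) (Eg q gs) (u@v))
      = (\<Sum>v\<in>bits L. (chi q (\<lambda>i. s!i) u * r^q / complex_of_real (sqrt (2^(q + L)))) *
            ((\<Prod>g<L. cnj (bgate (fst (gs!g)) (c!g) (v!g))) * (\<Prod>g<L. if v!g then X g else 1)))"
  proof (rule sum.cong[OF refl])
    fix v assume v: "v \<in> bits L"
    have g: "graph_state (q+L) (Eg q gs) (u@v) = (\<Prod>g<L. if v!g then X g else 1)
        / complex_of_real (sqrt (2^(q + L)))"
      using gs_split[OF u, of v] v unfolding L_def X_def by simp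
    show "(\<Prod>j<q+L. cnj (bb q gs j (s!j) ((u@v)!j))) * graph_state (q+L) (Eg q gs) (u@v)
      = (chi q (\<lambda>i. s!i) u * r^q / complex_of_real (sqrt (2^(q + L)))) *
            ((\<Prod>g<L. cnj (bgate (fst (gs!g)) (c!g) (v!g))) * (\<Prod>g<L. if v!g then X g else 1))"
      by (simp add: pb g)
  qed
  also have "\<dots> = chi q (\<lambda>i. s!i) u * r^q / complex_of_real (sqrt (2^(q + L))) *
           (\<Prod>g<L. (if c!g then X g else 1) * gfac q (gs!g) u)"
    by (simp only: sum_distrib_left[symmetric] sv)
  also have "\<dots> = (chi q (\<lambda>i. s!i) u * (\<Prod>g<L. if c!g then X g else 1)) * (\<Prod>g<L. gfac q (gs!g) u)
         * (r^q / complex_of_real (sqrt (2^(q + L))))"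
    by (simp add: prod.distrib)
  also have "\<dots> = chi q (\<lambda>i. s!i \<noteq> Wc q gs c i) u * prod_list (map (\<lambda>g. gfac q g u) gs)
        * complex_of_real (1 / (2 ^ q * sqrt (2 ^ L)))"
  proof -
    have "r^q / complex_of_real (sqrt (2^(q + L))) = complex_of_real (1 / (2 ^ q * sqrt (2 ^ L)))"
      unfolding r_def const_eq[symmetric] by simp
    then show ?thesis using cx by (simp add: prod_list_nth L_def)
  qed
  finally show ?thesis by (simp add: L_def c_def)
qed

lemma outcome_prob:
  assumes s: "s \<in> bits (q + length gs)"
  shows "mbqc_outcome_prob (q + length gs) (Eg q gs) (bb q gs) s
       = (cmod (amp q gs (\<lambda>i. s!i \<noteq> Wc q gs (drop q s) i)))\<^sup>2 / 2 ^ length gs"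
proof -
  define W where "W = (\<lambda>i. s!i \<noteq> Wc q gs (drop q s) i)"
  define k where "k = complex_of_real (1 / (2 ^ q * sqrt (2 ^ length gs)))"
  have "(\<Sum>t\<in>bits (q + length gs). (\<Prod>j<q + length gs. cnj (bb q gs j (s!j) (t!j))) * graph_state (q + length gs) (Eg q gs) t)
     = (\<Sum>u\<in>bits q. chi q W u * prod_list (map (\<lambda>g. gfac q g u) gs) * k)"
    unfolding sum_bits_append
    by (rule sum.cong[OF refl]) (simp add: inner_v[OF _ s] W_def k_def)
  also have "\<dots> = amp q gs W * (2^q * k)"
    by (simp add: amp_def sum_distrib_right[symmetric])
  also have "2^q * k = complex_of_real (1 / sqrt (2 ^ length gs))"
    by (simp add: k_def)
  finally have e: "(\<Sum>t\<in>bits (q + length gs). (\<Prod>j<q + length gs. cnj (bb q gs j (s!j) (t!j))) * graph_state (q + length gs) (Eg q gs) t)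
      = amp q gs W * complex_of_real (1 / sqrt (2 ^ length gs))" .
  show ?thesis unfolding mbqc_outcome_prob_def e W_def[symmetric]
    by (simp add: norm_divide power_divide)
qed

definition Am :: "nat \<Rightarrow> (real \<times> bool list) list \<Rightarrow> nat \<Rightarrow> nat \<Rightarrow> bool" where
  "Am q gs i j = (j = i \<or> (q \<le> j \<and> snd (gs!(j-q)) ! i))"

lemma post_nth:
  assumes s: "s \<in> bits (q + length gs)" and x: "x \<in> bits n" and nq: "n \<le> q" and i: "i < q"
  shows "lin_post q (q + length gs) n (Am q gs) (\<lambda>i j. i = j) (\<lambda>_. False) x s ! i
       = ((s!i \<noteq> Wc q gs (drop q s) i) \<noteq> (x @ replicate (q-n) False) ! i)"
proof -
  define L where "L = length gs"
  have ls: "length s = q + L" using s by (simp add: bits_def L_def)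
  have lx: "length x = n" using x by (simp add: bits_def)
  have "sg (odd (card {j. j < q + L \<and> Am q gs i j \<and> s!j}))
      = (\<Prod>j<q+L. sg (Am q gs i j \<and> s!j))"
    by (simp add: sg_card_lt)
  also have "\<dots> = (\<Prod>j<q. sg (j = i \<and> s!j)) * (\<Prod>g<L. sg (snd (gs!g) ! i \<and> drop q s ! g))"
    unfolding prod_add_split
    by (intro arg_cong2[where f="(*)"] prod.cong refl) (use i in \<open>auto simp: Am_def ls\<close>)
  also have "(\<Prod>j<q. sg (j = i \<and> s!j)) = sg (s!i)"
  proof -
    have "{j. j < q \<and> j = i \<and> s!j} = (if s!i then {i} else {})" using i by auto
    then show ?thesis by (simp add: sg_card_lt)
  qed
  also have "(\<Prod>g<L. sg (snd (gs!g) ! i \<and> drop q s ! g)) = sg (Wc q gs (drop q s) i)"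
    by (simp add: sg_card_lt Wc_def L_def)
  finally have a: "odd (card {j. j < q + L \<and> Am q gs i j \<and> s!j}) = (s!i \<noteq> Wc q gs (drop q s) i)"
    by (simp add: sg_xor[symmetric] sg_inj)
  have "{j. j < n \<and> i = j \<and> x!j} = (if i < n \<and> x!i then {i} else {})" by auto
  then have b: "odd (card {j. j < n \<and> i = j \<and> x!j}) = (x @ replicate (q-n) False) ! i"
    using i lx by (auto simp: nth_append)
  have r: "lin_post q (q + length gs) n (Am q gs) (\<lambda>i j. i = j) (\<lambda>_. False) x s ! i
     = ((False \<noteq> odd (card {j. j < q + L \<and> Am q gs i j \<and> s!j})) \<noteq> odd (card {j. j < n \<and> i = j \<and> x!j}))"
    using i by (simp add: lin_post_def L_def del: odd_card_imp_not_empty)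
  show ?thesis unfolding r a b by simp
qed

lemma amp_cong: "(\<And>i. i < q \<Longrightarrow> V i = W i) \<Longrightarrow> amp q gs V = amp q gs W"
  unfolding amp_def using chi_cong[of q V W] by simp

lemma post_char:
  assumes s: "s \<in> bits (q + length gs)" and x: "x \<in> bits n" and nq: "n \<le> q" and y: "y \<in> bits q"
  shows "(lin_post q (q + length gs) n (Am q gs) (\<lambda>i j. i = j) (\<lambda>_. False) x s = y)
     = (\<forall>i<q. s!i = ((y!i \<noteq> (x @ replicate (q-n) False) ! i) \<noteq> Wc q gs (drop q s) i))"
proof -
  have l: "length (lin_post q (q + length gs) n (Am q gs) (\<lambda>i j. i = j) (\<lambda>_. False) x s) = q"
    by (simp add: lin_post_def)
  have ly: "length y = q" using y by (simp add: bits_def)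
  show ?thesis
    unfolding list_eq_iff_nth_eq l ly using post_nth[OF s x nq] by auto
qed

lemma card_S:
  assumes x: "x \<in> bits n" and nq: "n \<le> q" and y: "y \<in> bits q"
  shows "card {s \<in> bits (q + length gs). lin_post q (q + length gs) n (Am q gs) (\<lambda>i j. i = j) (\<lambda>_. False) x s = y}
       = 2 ^ length gs"
proof -
  define L where "L = length gs"
  define x0 where "x0 = x @ replicate (q-n) False"
  define S where "S = {s \<in> bits (q + length gs). lin_post q (q + length gs) n (Am q gs) (\<lambda>i j. i = j) (\<lambda>_. False) x s = y}"
  define f' where "f' c = map (\<lambda>i. (y!i \<noteq> x0!i) \<noteq> Wc q gs c i) [0..<q] @ c" for c
  have Sc: "s \<in> S \<longleftrightarrow> s \<in> bits (q + L) \<and> (\<forall>i<q. s!i = ((y!i \<noteq> x0!i) \<noteq> Wc q gs (drop q s) i))" for s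
    unfolding S_def L_def x0_def using post_char[OF _ x nq y] by blast
  have "bij_betw (drop q) S (bits L)"
  proof (rule bij_betw_byWitness[where f'=f'])
    show "\<forall>s\<in>S. f' (drop q s) = s"
    proof
      fix s assume "s \<in> S"
      then have ls: "length s = q + L" and c: "\<forall>i<q. s!i = ((y!i \<noteq> x0!i) \<noteq> Wc q gs (drop q s) i)"
        using Sc by (auto simp: bits_def)
      show "f' (drop q s) = s"
        by (rule nth_equalityI) (auto simp: f'_def ls nth_append c)
    qed
    show "\<forall>c\<in>bits L. drop q (f' c) = c" by (simp add: f'_def)
    show "drop q ` S \<subseteq> bits L" using Sc by (auto simp: bits_def)
    show "f' ` bits L \<subseteq> S"
    proof
      fix s assume "s \<in> f' ` bits L"
      then obtain c where c: "c \<in> bits L" and sd: "s = f' c" by auto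
      have dq: "drop q s = c" using sd by (simp add: f'_def)
      show "s \<in> S" unfolding Sc
        using c by (auto simp: sd bits_def f'_def nth_append dq[unfolded sd])
    qed
  qed
  then have "card S = card (bits L)" by (rule bij_betw_same_card)
  then show ?thesis by (simp add: S_def L_def card_bits)
qed

lemma simple_Eg: "simple_graph (q + length gs) (Eg q gs)"
  by (auto simp: simple_graph_def Eg_def)

lemma onb_bb: "onb_bases (q + length gs) (bb q gs)"
  unfolding onb_bases_def
proof (intro allI impI)
  fix j k k' assume j: "j < q + length gs"
  show "(\<Sum>t\<in>UNIV. cnj (bb q gs j k t) * bb q gs j k' t) = (if k = k' then 1 else 0)"
  proof (cases "j < q")
    case True
    have r: "complex_of_real (1 / sqrt 2) * complex_of_real (1 / sqrt 2) = 1/2"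
      by (simp flip: of_real_mult)
    have r2: "complex_of_real (sqrt 2) * complex_of_real (sqrt 2) = 2"
      by (simp flip: of_real_mult)
    show ?thesis using True r2
      by (cases k; cases k') (auto simp: bb_def UNIV_bool sg_def r)
  next
    case False
    define th where "th = fst (gs ! (j - q))"
    have cs: "complex_of_real (cos th) * complex_of_real (cos th) + complex_of_real (sin th) * complex_of_real (sin th) = 1"
      by (simp flip: of_real_mult of_real_add)
    show ?thesis using False cs
      by (cases k; cases k') (auto simp: bb_def bgate_def UNIV_bool th_def[symmetric] algebra_simps)
  qed
qed

theorem lemma3:
  "\<exists>C::nat. \<forall>n q gates. iqp_circuit n q gates \<longrightarrow>
     (\<exists>m E b A B c.
        m \<le> C * (q + length gates + 1) ^ C \<and>
        simple_graph m E \<and> onb_bases m b \<and>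
        (\<forall>x \<in> bits n. \<forall>y \<in> bits q.
           mbqc_prob q m n E b A B c x y = iqp_prob gates q x y))"
proof (rule exI[where x=1], intro allI impI)
  fix n q gates assume circ: "iqp_circuit n q gates"
  have nq: "n \<le> q" and lg: "\<forall>g\<in>set gates. length (snd g) = q"
    using circ by (auto simp: iqp_circuit_def)
  define L where "L = length gates"
  show "\<exists>m E b A B c.
        m \<le> 1 * (q + length gates + 1) ^ 1 \<and>
        simple_graph m E \<and> onb_bases m b \<and>
        (\<forall>x \<in> bits n. \<forall>y \<in> bits q.
           mbqc_prob q m n E b A B c x y = iqp_prob gates q x y)"
  proof (intro exI conjI ballI)
    show "q + length gates \<le> 1 * (q + length gates + 1) ^ 1" by simp
    show "simple_graph (q + length gates) (Eg q gates)" by (rule simple_Eg)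
    show "onb_bases (q + length gates) (bb q gates)" by (rule onb_bb)
    fix x y assume x: "x \<in> bits n" and y: "y \<in> bits q"
    define x0 where "x0 = x @ replicate (q-n) False"
    define Wy where "Wy = (\<lambda>i. y!i \<noteq> x0!i)"
    have lx: "length x = n" using x by (simp add: bits_def)
    have lx0: "length x0 = q" using lx nq by (simp add: x0_def)
    have init: "iqp_init x q = (\<lambda>y. if y = x0 then 1 else 0)"
      by (simp add: iqp_init_def x0_def lx)
    have iqp: "iqp_prob gates q x y = (cmod (amp q gates Wy))\<^sup>2"
      unfolding iqp_prob_def init Wy_def using fold_amp[OF lg lx0 y] by simp
    define S where "S = {s \<in> bits (q + length gates). lin_post q (q + length gates) n (Am q gates) (\<lambda>i j. i = j) (\<lambda>_. False) x s = y}"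
    have each: "mbqc_outcome_prob (q + length gates) (Eg q gates) (bb q gates) s
        = (cmod (amp q gates Wy))\<^sup>2 / 2 ^ length gates" if s: "s \<in> S" for s
    proof -
      have sb: "s \<in> bits (q + length gates)" and p: "lin_post q (q + length gates) n (Am q gates) (\<lambda>i j. i = j) (\<lambda>_. False) x s = y"
        using s by (auto simp: S_def)
      have c: "\<forall>i<q. s!i = ((y!i \<noteq> x0!i) \<noteq> Wc q gates (drop q s) i)"
        using post_char[OF sb x nq y] p by (simp add: x0_def)
      have "amp q gates (\<lambda>i. s!i \<noteq> Wc q gates (drop q s) i) = amp q gates Wy"
        by (rule amp_cong) (use c in \<open>auto simp: Wy_def\<close>)
      then show ?thesis using outcome_prob[OF sb] by simp
    qed
    have "mbqc_prob q (q + length gates) n (Eg q gates) (bb q gates) (Am q gates) (\<lambda>i j. i = j) (\<lambda>_. False) x y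
        = (\<Sum>s\<in>S. (cmod (amp q gates Wy))\<^sup>2 / 2 ^ length gates)"
      unfolding mbqc_prob_def S_def[symmetric] by (rule sum.cong[OF refl]) (rule each)
    also have "\<dots> = real (card S) * ((cmod (amp q gates Wy))\<^sup>2 / 2 ^ length gates)"
      by simp
    also have "card S = 2 ^ length gates" unfolding S_def by (rule card_S[OF x nq y])
    finally show "mbqc_prob q (q + length gates) n (Eg q gates) (bb q gates) (Am q gates) (\<lambda>i j. i = j) (\<lambda>_. False) x y
        = iqp_prob gates q x y" by (simp add: iqp)
  qed
qed

end
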